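(* Let $k_1,k_2\ge1$ be integers. Then $\mathcal{J}^{12}_{[-1,\infty),[0,\infty)}=\mathcal{J}^{12}_{[0,\infty),[-1,\infty)}=\mathcal{J}^{12}_{[0,\infty),[0,\infty)}$.
   Context: $\mathcal{F}$ is the free $\mathbb{Z}[A^{\pm1}]$-module with basis the symbols $s_1^{l_1}s_2^{l_2}s_3^{l_3}$, $l_i\ge 0$, extended multilinearly to integer exponents by $s_i^{-1}=0$ and $s_i^{n}=-s_i^{-n-2}$ for $n\le -2$. For $n_i\in\mathbb{Z}$, $R_{12}(n_1,n_2,n_3)=-A^{-n_1-n_2-2}s_1^{n_1}s_2^{n_2}s_3^{n_3}-A^{-n_1-n_2+2}s_1^{n_1-2}s_2^{n_2-2}s_3^{n_3}-A^{-n_1-n_2}s_1^{n_1-1}s_2^{n_2-1}s_3^{n_3+1}-A^{-n_1-n_2}s_1^{n_1-1}s_2^{n_2-1}s_3^{n_3-1}$ and $R_{12}^{n_1,n_2,n_3}=R_{12}(n_1,n_2,n_3)-R_{12}(-n_1+k_1,-n_2+k_2,n_3)$. For $I_1,I_2\subseteq\mathbb{R}$, $\mathcal{J}^{12}_{I_1,I_2}$ is the submodule of $\mathcal{F}$ generated by $\{R^{n_1,n_2,n_3}_{12}: n_1\in I_1\cap\mathbb{Z},\ n_2\in I_2\cap\mathbb{Z},\ n_3\in\mathbb{Z}_{\ge0}\}$. *)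

theory Defs
  imports Complex_Main "HOL-Library.Poly_Mapping"
begin

text \<open>The ring Z[A^{+-1}] of Laurent polynomials is the group ring of (int,+) over int,
  i.e. finitely supported functions int to int with convolution product.\<close>
type_synonym laurent = "int \<Rightarrow>\<^sub>0 int"

text \<open>The free Z[A^{+-1}]-module F with basis s1^l1 s2^l2 s3^l3, l_i >= 0:
  finitely supported maps from exponent triples to Laurent coefficients.\<close>
type_synonym fmod = "(nat \<times> nat \<times> nat) \<Rightarrow>\<^sub>0 laurent"

definition Apow :: "int \<Rightarrow> laurent" where
  "Apow k = Poly_Mapping.single k 1"

definition smult_F :: "laurent \<Rightarrow> fmod \<Rightarrow> fmod" where
  "smult_F p x = Poly_Mapping.map (\<lambda>c. p * c) x"

text \<open>Extension to integer exponents: s^n = sgn_ext n * s^(exp_ext n), where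
  s^{-1} = 0 and s^n = - s^{-n-2} for n <= -2.\<close>
definition sgn_ext :: "int \<Rightarrow> int" where
  "sgn_ext n = (if n \<ge> 0 then 1 else if n = -1 then 0 else -1)"

definition exp_ext :: "int \<Rightarrow> nat" where
  "exp_ext n = (if n \<ge> 0 then nat n else nat (-n - 2))"

definition mon :: "laurent \<Rightarrow> int \<Rightarrow> int \<Rightarrow> int \<Rightarrow> fmod" where
  "mon c n1 n2 n3 = Poly_Mapping.single (exp_ext n1, exp_ext n2, exp_ext n3)
      (c * of_int (sgn_ext n1 * sgn_ext n2 * sgn_ext n3))"

definition R12 :: "int \<Rightarrow> int \<Rightarrow> int \<Rightarrow> fmod" where
  "R12 n1 n2 n3 =
     - mon (Apow (-n1 - n2 - 2)) n1 n2 n3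
     - mon (Apow (-n1 - n2 + 2)) (n1 - 2) (n2 - 2) n3
     - mon (Apow (-n1 - n2)) (n1 - 1) (n2 - 1) (n3 + 1)
     - mon (Apow (-n1 - n2)) (n1 - 1) (n2 - 1) (n3 - 1)"

definition R12s :: "int \<Rightarrow> int \<Rightarrow> int \<Rightarrow> int \<Rightarrow> int \<Rightarrow> fmod" where
  "R12s k1 k2 n1 n2 n3 = R12 n1 n2 n3 - R12 (-n1 + k1) (-n2 + k2) n3"

inductive_set submod_gen :: "fmod set \<Rightarrow> fmod set" for S where
  zero: "0 \<in> submod_gen S"
| gen: "g \<in> S \<Longrightarrow> g \<in> submod_gen S"
| add: "x \<in> submod_gen S \<Longrightarrow> y \<in> submod_gen S \<Longrightarrow> x + y \<in> submod_gen S"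
| smult: "x \<in> submod_gen S \<Longrightarrow> smult_F p x \<in> submod_gen S"

definition J12 :: "int \<Rightarrow> int \<Rightarrow> real set \<Rightarrow> real set \<Rightarrow> fmod set" where
  "J12 k1 k2 I1 I2 = submod_gen
     {R12s k1 k2 n1 n2 (int n3) | n1 n2 n3. real_of_int n1 \<in> I1 \<and> real_of_int n2 \<in> I2}"

end

theory Submission
  imports Defs
begin

lemma lookup_smult: "Poly_Mapping.lookup (smult_F p x) k = p * Poly_Mapping.lookup x k"
  unfolding smult_F_def by (simp add: Poly_Mapping.map.rep_eq when_def)

lemma smult_add: "smult_F p (x + y) = smult_F p x + smult_F p y"
  by (rule poly_mapping_eqI) (simp add: lookup_smult lookup_add algebra_simps)
lemma smult_uminus: "smult_F p (- x) = - smult_F p x"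
  by (rule poly_mapping_eqI) (simp add: lookup_smult)
lemma smult_diff: "smult_F p (x - y) = smult_F p x - smult_F p y"
  by (rule poly_mapping_eqI) (simp add: lookup_smult lookup_minus algebra_simps)
lemma smult_zero: "smult_F p 0 = 0"
  by (rule poly_mapping_eqI) (simp add: lookup_smult)
lemma smult_m1: "smult_F (-1) x = - x"
  by (rule poly_mapping_eqI) (simp add: lookup_smult)
lemma smult_mon: "smult_F p (mon q a b d) = mon (p * q) a b d"
  unfolding smult_F_def mon_def by (simp add: mult.assoc)
lemma mon_add: "mon (p + q) a b d = mon p a b d + mon q a b d"
  unfolding mon_def by (simp add: single_add distrib_right)
lemma mon_uminus: "mon (- p) a b d = - mon p a b d"
  unfolding mon_def by (simp add: single_uminus)
lemma Apow_add: "Apow i * Apow j = Apow (i + j)"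
  unfolding Apow_def by (simp add: mult_single)

lemma sgn_exp_refl: "sgn_ext (-a-2) = - sgn_ext a \<and> (sgn_ext a \<noteq> 0 \<longrightarrow> exp_ext (-a-2) = exp_ext a)"
  unfolding sgn_ext_def exp_ext_def by auto

lemma mon_refl1: "mon c a b d = - mon c (-a-2) b d"
  using sgn_exp_refl[of a]
  unfolding mon_def by (cases "sgn_ext a = 0") (auto simp: single_uminus)
lemma mon_refl2: "mon c a b d = - mon c a (-b-2) d"
  using sgn_exp_refl[of b]
  unfolding mon_def by (cases "sgn_ext b = 0") (auto simp: single_uminus)
lemma mon_refl3: "mon c a b d = - mon c a b (-d-2)"
  using sgn_exp_refl[of d]
  unfolding mon_def by (cases "sgn_ext d = 0") (auto simp: single_uminus)
lemma mon_m1: "mon c (-1) b d = 0" "mon c a (-1) d = 0" "mon c a b (-1) = 0"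
  unfolding mon_def sgn_ext_def by auto

definition Zc where "Zc x w c = smult_F (Apow 4) (R12 x w c) + R12 (x+2) (w-2) c
  + smult_F (Apow 2) (R12 (x+1) (w-1) (c+1)) + smult_F (Apow 2) (R12 (x+1) (w-1) (c-1))"
definition Yc where "Yc x y c = R12 x y c + smult_F (Apow 4) (R12 (x+2) (y-2) c)
  + smult_F (Apow 2) (R12 (x+1) (y-1) (c+1)) + smult_F (Apow 2) (R12 (x+1) (y-1) (c-1))"

lemmas msimps = smult_add smult_diff smult_uminus smult_mon Apow_add mon_uminus

definition G :: "int \<Rightarrow> int \<Rightarrow> int \<Rightarrow> int \<Rightarrow> int \<Rightarrow> int \<Rightarrow> int \<Rightarrow> fmod" where
  "G x w c n i j l = mon (Apow (n - x - w)) (x+i) (w+j) (c+l)"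

lemma canon: "mon (Apow e) a b d = G x w c (e + x + w) (a - x) (b - w) (d - c)"
  unfolding G_def by simp

lemma Zc_expand: "Zc x w c = - G x w c (2) (0) (0) (0) - G x w c (6) (-2) (-2) (0) - G x w c (4) (-1) (-1) (1) - G x w c (4) (-1) (-1) (-1) - G x w c (-2) (2) (-2) (0) - G x w c (2) (0) (-4) (0) - G x w c (0) (1) (-3) (1) - G x w c (0) (1) (-3) (-1) - G x w c (0) (1) (-1) (1) - G x w c (4) (-1) (-3) (1) - G x w c (2) (0) (-2) (2) - G x w c (2) (0) (-2) (0) - G x w c (0) (1) (-1) (-1) - G x w c (4) (-1) (-3) (-1) - G x w c (2) (0) (-2) (0) - G x w c (2) (0) (-2) (-2)"
  unfolding Zc_def R12_def
  apply (simp only: msimps)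
  apply (simp only: canon[of _ _ _ _ x w c])
  apply (simp add: algebra_simps)
  done

lemma Yc_expand: "Yc x w c = - G x w c (-2) (0) (0) (0) - G x w c (2) (-2) (-2) (0) - G x w c (0) (-1) (-1) (1) - G x w c (0) (-1) (-1) (-1) - G x w c (2) (2) (-2) (0) - G x w c (6) (0) (-4) (0) - G x w c (4) (1) (-3) (1) - G x w c (4) (1) (-3) (-1) - G x w c (0) (1) (-1) (1) - G x w c (4) (-1) (-3) (1) - G x w c (2) (0) (-2) (2) - G x w c (2) (0) (-2) (0) - G x w c (0) (1) (-1) (-1) - G x w c (4) (-1) (-3) (-1) - G x w c (2) (0) (-2) (0) - G x w c (2) (0) (-2) (-2)"
  unfolding Yc_def R12_def
  apply (simp only: msimps)
  apply (simp only: canon[of _ _ _ _ x w c])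
  apply (simp add: algebra_simps)
  done

lemma mon_cong: "p = p' \<Longrightarrow> a = a' \<Longrightarrow> b = b' \<Longrightarrow> d = d' \<Longrightarrow> mon p a b d = mon p' a' b' d'"
  by simp

lemma G_reflw: "smult_F (Apow (2-2*w)) (G x (2-w) c n i j l) = - G x w c n i (-4-j) l"
  unfolding G_def smult_mon Apow_add
  apply (subst mon_refl2)
  apply (subst neg_equal_iff_equal, rule mon_cong) apply (simp_all add: algebra_simps)
  done

lemma G_reflx: "smult_F (Apow (-2-2*x)) (G (-2-x) y c n i j l) = - G x y c n (-i) j l"
  unfolding G_def smult_mon Apow_add
  apply (subst mon_refl1)
  apply (subst neg_equal_iff_equal, rule mon_cong) apply (simp_all add: algebra_simps)
  done

lemma ZR: "Zc x w c + smult_F (Apow (2 - 2*w)) (Zc x (2-w) c) = 0"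
  apply (simp only: Zc_expand[of x w c] Zc_expand[of x "2-w" c] msimps)
  apply (simp only: G_reflw)
  apply (simp add: algebra_simps)
  done

lemma YR: "Yc x y c + smult_F (Apow (-2 - 2*x)) (Yc (-2-x) y c) = 0"
  apply (simp only: Yc_expand[of x y c] Yc_expand[of "-2-x" y c] msimps)
  apply (simp only: G_reflx)
  apply (simp add: algebra_simps)
  done

lemma tf_l: "(a::laurent) + a = 0 \<Longrightarrow> a = 0"
proof (rule poly_mapping_eqI)
  fix m assume "a + a = 0"
  then have "Poly_Mapping.lookup (a + a) m = 0" by simp
  then have "Poly_Mapping.lookup a m + Poly_Mapping.lookup a m = 0" by (simp only: lookup_add)
  then show "Poly_Mapping.lookup a m = Poly_Mapping.lookup 0 m" by simp
qed

lemma tf: "(x::fmod) + x = 0 \<Longrightarrow> x = 0"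
proof (rule poly_mapping_eqI)
  fix m assume "x + x = 0"
  then have "Poly_Mapping.lookup (x + x) m = 0" by simp
  then have "Poly_Mapping.lookup x m + Poly_Mapping.lookup x m = 0" by (simp only: lookup_add)
  then show "Poly_Mapping.lookup x m = Poly_Mapping.lookup 0 m" using tf_l by simp
qed

lemma smult_one: "smult_F 1 x = x"
  by (rule poly_mapping_eqI) (simp add: lookup_smult)

lemma Apow0: "Apow 0 = 1" unfolding Apow_def by simp

lemma Y0: "Yc (-1) y c = 0"
proof -
  have e: "-2 - 2 * (-1::int) = 0" "-2 - (-1::int) = -1" by simp_all
  show ?thesis
    apply (rule tf)
    using YR[of "-1" y c, unfolded e] by (simp only: Apow0 smult_one)
qed

lemma Z1: "Zc x 1 c = 0"
proof -
  have e: "2 - 2 * (1::int) = 0" "2 - (1::int) = 1" by simp_all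
  show ?thesis
    apply (rule tf)
    using ZR[of x 1 c, unfolded e] by (simp only: Apow0 smult_one)
qed

lemma ab4: "(a::'a::ab_group_add) - a' + (b - b') + (c - c') + (d - d') = (a + b + c + d) - (b' + a' + c' + d')"
  by (simp add: algebra_simps)

lemma YcombG: "R12s k1 k2 x y c + smult_F (Apow 4) (R12s k1 k2 (x+2) (y-2) c)
   + smult_F (Apow 2) (R12s k1 k2 (x+1) (y-1) (c+1)) + smult_F (Apow 2) (R12s k1 k2 (x+1) (y-1) (c-1))
   = Yc x y c - Zc (k1-x-2) (k2-y+2) c"
proof -
  have e: "k1-x-2+2 = k1-x" "k2-y+2-2 = k2-y" "-(x+2)+k1 = k1-x-2" "-(y-2)+k2 = k2-y+2"
    "-(x+1)+k1 = k1-x-2+1" "-(y-1)+k2 = k2-y+2-1" "-x+k1 = k1-x" "-y+k2 = k2-y" by simp_all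
  show ?thesis
    unfolding R12s_def Yc_def Zc_def smult_diff e by (rule ab4)
qed

lemma ZcombG: "smult_F (Apow 4) (R12s k1 k2 x w c) + R12s k1 k2 (x+2) (w-2) c
   + smult_F (Apow 2) (R12s k1 k2 (x+1) (w-1) (c+1)) + smult_F (Apow 2) (R12s k1 k2 (x+1) (w-1) (c-1))
   = Zc x w c - Yc (k1-x-2) (k2-w+2) c"
proof -
  have e: "k1-x-2+2 = k1-x" "k2-w+2-2 = k2-w" "-(x+2)+k1 = k1-x-2" "-(w-2)+k2 = k2-w+2"
    "-(x+1)+k1 = k1-x-2+1" "-(w-1)+k2 = k2-w+2-1" "-x+k1 = k1-x" "-w+k2 = k2-w" by simp_all
  show ?thesis
    unfolding R12s_def Yc_def Zc_def smult_diff e by (rule ab4)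
qed

abbreviation J00 where "J00 k1 k2 \<equiv> J12 k1 k2 {0..} {0..}"

lemma sg_add: "x \<in> submod_gen S \<Longrightarrow> y \<in> submod_gen S \<Longrightarrow> x + y \<in> submod_gen S"
  by (rule submod_gen.add)
lemma sg_smult: "x \<in> submod_gen S \<Longrightarrow> smult_F p x \<in> submod_gen S"
  by (rule submod_gen.smult)
lemma sg_neg: "x \<in> submod_gen S \<Longrightarrow> - x \<in> submod_gen S"
  using submod_gen.smult[of x S "-1"] by (simp add: smult_m1)
lemma sg_diff: "x \<in> submod_gen S \<Longrightarrow> y \<in> submod_gen S \<Longrightarrow> x - y \<in> submod_gen S"
  using sg_add[OF _ sg_neg, of x S y] by simp

lemma j_add: "x \<in> J12 k1 k2 I1 I2 \<Longrightarrow> y \<in> J12 k1 k2 I1 I2 \<Longrightarrow> x + y \<in> J12 k1 k2 I1 I2"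
  unfolding J12_def by (rule sg_add)
lemma j_smult: "x \<in> J12 k1 k2 I1 I2 \<Longrightarrow> smult_F p x \<in> J12 k1 k2 I1 I2"
  unfolding J12_def by (rule sg_smult)
lemma j_neg: "x \<in> J12 k1 k2 I1 I2 \<Longrightarrow> - x \<in> J12 k1 k2 I1 I2"
  unfolding J12_def by (rule sg_neg)
lemma j_diff: "x \<in> J12 k1 k2 I1 I2 \<Longrightarrow> y \<in> J12 k1 k2 I1 I2 \<Longrightarrow> x - y \<in> J12 k1 k2 I1 I2"
  unfolding J12_def by (rule sg_diff)

lemma gen_mem: "0 \<le> a \<Longrightarrow> 0 \<le> b \<Longrightarrow> 0 \<le> c \<Longrightarrow> R12s k1 k2 a b c \<in> J00 k1 k2"
  unfolding J12_def
  apply (rule submod_gen.gen)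
  apply (rule CollectI)
  apply (rule exI[of _ a], rule exI[of _ b], rule exI[of _ "nat c"])
  by simp

lemma mon_m2: "mon p a b (-2) = - mon p a b 0"
  using mon_refl3[of p a b "-2"] by simp

lemma R12_m1: "R12 a b (-1) = 0"
  unfolding R12_def by (simp add: mon_m1 mon_m2)

lemma R12s_m1: "R12s k1 k2 a b (-1) = 0"
  unfolding R12s_def by (simp add: R12_m1)

lemma antisym: "R12s k1 k2 a b c = - R12s k1 k2 (k1-a) (k2-b) c"
  unfolding R12s_def by simp

lemma memQ:
  assumes "(0 \<le> a \<and> 0 \<le> b) \<or> (a \<le> k1 \<and> b \<le> k2)" and "-1 \<le> c"
  shows "R12s k1 k2 a b c \<in> J00 k1 k2"
proof (cases "c = -1")
  case True
  then show ?thesis by (simp add: R12s_m1 J12_def submod_gen.zero)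
next
  case False
  then have c: "0 \<le> c" using assms(2) by simp
  show ?thesis using assms(1)
  proof
    assume "0 \<le> a \<and> 0 \<le> b" then show ?thesis using gen_mem c by blast
  next
    assume "a \<le> k1 \<and> b \<le> k2"
    then have "R12s k1 k2 (k1-a) (k2-b) c \<in> J00 k1 k2" using gen_mem c by simp
    then show ?thesis by (subst antisym) (rule j_neg)
  qed
qed

lemma ZR': "Zc x w c = - smult_F (Apow (2 - 2*w)) (Zc x (2-w) c)"
  using ZR[of x w c] by (simp add: eq_neg_iff_add_eq_0)

lemma YR': "Yc x y c = - smult_F (Apow (-2 - 2*x)) (Yc (-2-x) y c)"
  using YR[of x y c] by (simp add: eq_neg_iff_add_eq_0)

lemma Zmem2:
  assumes "1 \<le> k1" "2 \<le> w" "0 \<le> c"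
  shows "Zc (k1-1) w c \<in> J00 k1 k2"
proof -
  have e: "Zc (k1-1) w c = smult_F (Apow 4) (R12s k1 k2 (k1-1) w c) + R12s k1 k2 (k1-1+2) (w-2) c
   + smult_F (Apow 2) (R12s k1 k2 (k1-1+1) (w-1) (c+1)) + smult_F (Apow 2) (R12s k1 k2 (k1-1+1) (w-1) (c-1))"
    using ZcombG[of k1 k2 "k1-1" w c] Y0 by simp
  show ?thesis unfolding e using assms
    by (intro j_add j_smult memQ) auto
qed

lemma Zmem:
  assumes "1 \<le> k1" "0 \<le> c"
  shows "Zc (k1-1) w c \<in> J00 k1 k2"
proof (cases "w \<ge> 2")
  case True then show ?thesis using Zmem2 assms by blast
next
  case False
  show ?thesis
  proof (cases "w = 1")
    case True then show ?thesis by (simp add: Z1 J12_def submod_gen.zero)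
  next
    case False
    then have "2 \<le> 2 - w" using \<open>\<not> w \<ge> 2\<close> by simp
    then show ?thesis by (subst ZR') (intro j_neg j_smult Zmem2 assms)
  qed
qed

lemma Ymem2:
  assumes "1 \<le> k2" "0 \<le> u" "0 \<le> c"
  shows "Yc u (k2+1) c \<in> J00 k1 k2"
proof -
  have e: "Yc u (k2+1) c = R12s k1 k2 u (k2+1) c + smult_F (Apow 4) (R12s k1 k2 (u+2) (k2+1-2) c)
   + smult_F (Apow 2) (R12s k1 k2 (u+1) (k2+1-1) (c+1)) + smult_F (Apow 2) (R12s k1 k2 (u+1) (k2+1-1) (c-1))"
    using YcombG[of k1 k2 u "k2+1" c] Z1 by simp
  show ?thesis unfolding e using assms
    by (intro j_add j_smult memQ) auto
qed

lemma Ymem: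
  assumes "1 \<le> k2" "v \<le> -1" "0 \<le> c"
  shows "Yc v (k2+1) c \<in> J00 k1 k2"
proof (cases "v = -1")
  case True then show ?thesis by (simp add: Y0 J12_def submod_gen.zero)
next
  case False
  then have "0 \<le> -2 - v" using assms by simp
  then show ?thesis by (subst YR') (intro j_neg j_smult Ymem2 assms)
qed

lemma part1:
  assumes "1 \<le> k1" "1 \<le> k2" "0 \<le> y" "0 \<le> c"
  shows "R12s k1 k2 (-1) y c \<in> J00 k1 k2"
proof (cases "y \<le> k2")
  case True then show ?thesis using assms by (intro memQ) auto
next
  case False
  have e: "R12s k1 k2 (-1) y c = - Zc (k1-1) (k2-y+2) c - (smult_F (Apow 4) (R12s k1 k2 (-1+2) (y-2) c)
   + smult_F (Apow 2) (R12s k1 k2 (-1+1) (y-1) (c+1)) + smult_F (Apow 2) (R12s k1 k2 (-1+1) (y-1) (c-1)))"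
    using YcombG[of k1 k2 "-1" y c] Y0 by (simp add: algebra_simps)
  show ?thesis unfolding e using assms False
    by (intro j_diff j_neg Zmem j_add j_smult memQ) auto
qed

lemma part2:
  assumes "1 \<le> k1" "1 \<le> k2" "0 \<le> x" "0 \<le> c"
  shows "R12s k1 k2 x (-1) c \<in> J00 k1 k2"
proof (cases "x \<le> k1")
  case True then show ?thesis using assms by (intro memQ) auto
next
  case False
  have e: "R12s k1 k2 x (-1) c = - Yc (k1-x) (k2+1) c - (smult_F (Apow 4) (R12s k1 k2 (x-2) 1 c)
   + smult_F (Apow 2) (R12s k1 k2 (x-2+1) (1-1) (c+1)) + smult_F (Apow 2) (R12s k1 k2 (x-2+1) (1-1) (c-1)))"
    using ZcombG[of k1 k2 "x-2" 1 c] Z1 by (simp add: algebra_simps)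
  show ?thesis unfolding e using assms False
    by (intro j_diff j_neg Ymem j_add j_smult memQ) auto
qed

lemma sg_sub:
  assumes "S \<subseteq> submod_gen T"
  shows "submod_gen S \<subseteq> submod_gen T"
proof
  fix x assume "x \<in> submod_gen S"
  then show "x \<in> submod_gen T"
    by induction (use assms in \<open>auto intro: submod_gen.intros\<close>)
qed

lemma j_sub: "S \<subseteq> J12 k1 k2 I1 I2 \<Longrightarrow> submod_gen S \<subseteq> J12 k1 k2 I1 I2"
  unfolding J12_def by (rule sg_sub)

lemma sg_mono: "S \<subseteq> T \<Longrightarrow> submod_gen S \<subseteq> submod_gen T"
  by (rule sg_sub) (auto intro: submod_gen.gen)

theorem lemma4p3:
  fixes k1 k2 :: int
  assumes "k1 \<ge> 1" and "k2 \<ge> 1"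
  shows "J12 k1 k2 {-1..} {0..} = J12 k1 k2 {0..} {-1..}
       \<and> J12 k1 k2 {0..} {-1..} = J12 k1 k2 {0..} {0..}"
proof -
  have A: "J12 k1 k2 {-1..} {0..} = J00 k1 k2"
  proof
    show "J12 k1 k2 {-1..} {0..} \<subseteq> J00 k1 k2"
      unfolding J12_def[of k1 k2 "{-1..}"]
    proof (rule j_sub, rule subsetI)
      fix g assume "g \<in> {R12s k1 k2 n1 n2 (int n3) |n1 n2 n3. real_of_int n1 \<in> {-1..} \<and> real_of_int n2 \<in> {0..}}"
      then obtain n1 n2 n3 where g: "g = R12s k1 k2 n1 n2 (int n3)" and h: "-1 \<le> n1" "0 \<le> n2" by auto
      show "g \<in> J00 k1 k2"
      proof (cases "n1 = -1")
        case True then show ?thesis using part1 assms g h by simp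
      next
        case False then show ?thesis using gen_mem g h by simp
      qed
    qed
    show "J00 k1 k2 \<subseteq> J12 k1 k2 {-1..} {0..}"
      unfolding J12_def
      apply (rule sg_mono, rule subsetI, clarsimp)
      subgoal for n1 n2 n3 by (rule exI[of _ n1], rule exI[of _ n2]) auto
      done
  qed
  have B: "J12 k1 k2 {0..} {-1..} = J00 k1 k2"
  proof
    show "J12 k1 k2 {0..} {-1..} \<subseteq> J00 k1 k2"
      unfolding J12_def[of k1 k2 "{0..}" "{-1..}"]
    proof (rule j_sub, rule subsetI)
      fix g assume "g \<in> {R12s k1 k2 n1 n2 (int n3) |n1 n2 n3. real_of_int n1 \<in> {0..} \<and> real_of_int n2 \<in> {-1..}}"
      then obtain n1 n2 n3 where g: "g = R12s k1 k2 n1 n2 (int n3)" and h: "0 \<le> n1" "-1 \<le> n2" by auto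
      show "g \<in> J00 k1 k2"
      proof (cases "n2 = -1")
        case True then show ?thesis using part2 assms g h by simp
      next
        case False then show ?thesis using gen_mem g h by simp
      qed
    qed
    show "J00 k1 k2 \<subseteq> J12 k1 k2 {0..} {-1..}"
      unfolding J12_def
      apply (rule sg_mono, rule subsetI, clarsimp)
      subgoal for n1 n2 n3 by (rule exI[of _ n1], rule exI[of _ n2]) auto
      done
  qed
  show ?thesis using A B by simp
qed

end
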